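(* Let $\nu$ be a fixed order, let $a<b$, and let $f,g\in C^{\infty}[a,b]$ with $g(x)\neq 0$ and $g'(x)\neq 0$ for all $x\in[a,b]$. For $\omega>0$ set $\mathcal{H}_{\nu}[f]=\int_a^b f(x)J_{\nu}(\omega g(x))\,dx$. Define $\sigma_0[f](x)=f(x)$ and, for $k\ge 1$, $$\sigma_k[f](x)=g(x)^{\nu+k}\frac{d}{dx}\left[\frac{\sigma_{k-1}[f](x)}{g(x)^{\nu+k}g'(x)}\right].$$ Then, as $\omega\to\infty$, $$\mathcal{H}_{\nu}[f]\sim-\sum_{k=1}^{\infty}\frac{1}{(-\omega)^k}\left\{\frac{\sigma_{k-1}[f](b)}{g'(b)}J_{\nu+k}(\omega g(b))-\frac{\sigma_{k-1}[f](a)}{g'(a)}J_{\nu+k}(\omega g(a))\right\}.$$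
   Context: $J_\nu$ denotes the Bessel function of the first kind of order $\nu$. The symbol $\sim$ denotes an asymptotic expansion as $\omega\to\infty$. *)

theory Defs
  imports "HOL-Analysis.Analysis" "HOL-Library.Landau_Symbols"
begin

text \<open>Bessel function of the first kind of real order nu, at a complex argument,
  via its power series  J_nu(z) = (z/2)^nu * sum_m (-1)^m (z/2)^(2m) / (m! Gamma(m+nu+1)),
  with the principal branch of (z/2)^nu and 1/Gamma written as rGamma (entire).\<close>
definition besselJ :: "real \<Rightarrow> complex \<Rightarrow> complex" where
  "besselJ nu z = (z / 2) powr (complex_of_real nu) *
     (\<Sum>m. (-1) ^ m * (z / 2) ^ (2 * m) * rGamma (of_nat m + complex_of_real nu + 1) / fact m)"

definition smooth_on_interval :: "real \<Rightarrow> real \<Rightarrow> (real \<Rightarrow> real) \<Rightarrow> bool" where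
  "smooth_on_interval a b f \<longleftrightarrow>
     (\<exists>D :: nat \<Rightarrow> real \<Rightarrow> real. (\<forall>x\<in>{a..b}. D 0 x = f x) \<and>
        (\<forall>n. \<forall>x\<in>{a..b}. (D n has_real_derivative D (Suc n) x) (at x within {a..b})))"

definition dI :: "real \<Rightarrow> real \<Rightarrow> (real \<Rightarrow> 'v::real_normed_vector) \<Rightarrow> real \<Rightarrow> 'v" where
  "dI a b h x = vector_derivative h (at x within {a..b})"

text \<open>The operators sigma_k[f]; powers g^(nu+k) use the principal complex branch.\<close>
fun sigma :: "real \<Rightarrow> real \<Rightarrow> real \<Rightarrow> (real \<Rightarrow> real) \<Rightarrow> (real \<Rightarrow> real) \<Rightarrow> nat \<Rightarrow> real \<Rightarrow> complex" where
  "sigma a b nu g f 0 x = complex_of_real (f x)"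
| "sigma a b nu g f (Suc k) x =
     complex_of_real (g x) powr complex_of_real (nu + real (Suc k)) *
     dI a b (\<lambda>y. sigma a b nu g f k y /
                 (complex_of_real (g y) powr complex_of_real (nu + real (Suc k)) *
                  complex_of_real (dI a b g y))) x"

definition hankelI :: "real \<Rightarrow> real \<Rightarrow> real \<Rightarrow> (real \<Rightarrow> real) \<Rightarrow> (real \<Rightarrow> real) \<Rightarrow> real \<Rightarrow> complex" where
  "hankelI a b nu g f \<omega> =
     integral {a..b} (\<lambda>x. complex_of_real (f x) * besselJ nu (complex_of_real (\<omega> * g x)))"

text \<open>k-th term of the expansion (without the overall minus sign).\<close>
definition asym_term :: "real \<Rightarrow> real \<Rightarrow> real \<Rightarrow> (real \<Rightarrow> real) \<Rightarrow> (real \<Rightarrow> real) \<Rightarrow> nat \<Rightarrow> real \<Rightarrow> complex" where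
  "asym_term a b nu g f k \<omega> =
     1 / complex_of_real ((- \<omega>) ^ k) *
     (sigma a b nu g f (k - 1) b / complex_of_real (dI a b g b) *
        besselJ (nu + real k) (complex_of_real (\<omega> * g b))
      - sigma a b nu g f (k - 1) a / complex_of_real (dI a b g a) *
        besselJ (nu + real k) (complex_of_real (\<omega> * g a)))"

end

theory Submission
  imports Defs
begin


definition bc :: "real \<Rightarrow> nat \<Rightarrow> complex" where
  "bc mu m = (-1)^m * rGamma (of_nat m + complex_of_real mu + 1) / fact m"

definition BT :: "real \<Rightarrow> complex \<Rightarrow> complex" where
  "BT mu w = (\<Sum>m. bc mu m * w^m)"

lemma bc_Suc: "bc mu (Suc n) * (of_nat n + complex_of_real mu + 1) = - bc mu n / of_nat (Suc n)"
proof -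
  have r: "(of_nat n + complex_of_real mu + 1) * rGamma (of_nat n + complex_of_real mu + 1 + 1) = rGamma (of_nat n + complex_of_real mu + 1)"
    by (rule rGamma_plus1)
  have e: "of_nat (Suc n) + complex_of_real mu + 1 = of_nat n + complex_of_real mu + 1 + 1" by simp
  show ?thesis unfolding bc_def e
    using r by (simp add: field_simps)
qed

lemma bc_summable: "summable (\<lambda>m. bc mu m * w^m)"
proof (rule summable_ratio_test[of "1/2" "nat \<lceil>\<bar>mu\<bar> + 2 * norm w + 2\<rceil>"])
  fix n assume n: "nat \<lceil>\<bar>mu\<bar> + 2 * norm w + 2\<rceil> \<le> n"
  hence n1: "real n \<ge> \<bar>mu\<bar> + 2 * norm w + 2" by linarith
  define z where "z = of_nat n + complex_of_real mu + 1"
  have zr: "z = complex_of_real (real n + mu + 1)" unfolding z_def by simp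
  have "norm z = \<bar>real n + mu + 1\<bar>" unfolding zr by (rule norm_of_real)
  moreover have "real n + mu + 1 \<ge> 0" using n1 by (smt (verit) norm_ge_zero)
  ultimately have nz: "norm z = real n + mu + 1" by simp
  have nz1: "norm z \<ge> 1" using nz n1 abs_ge_minus_self[of mu] norm_ge_zero[of w] by linarith
  have h: "bc mu (Suc n) * z = - bc mu n / of_nat (Suc n)" using bc_Suc z_def by simp
  hence "norm (bc mu (Suc n)) * norm z = norm (bc mu n) / real (Suc n)"
    by (metis norm_minus_cancel norm_divide norm_mult norm_of_nat)
  hence "norm (bc mu (Suc n)) * (real (Suc n) * norm z) = norm (bc mu n)"
    using nz1 by (simp add: field_simps del: of_nat_Suc)
  moreover have "real (Suc n) * norm z \<noteq> 0" using nz1 by (cases "z = 0") auto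
  ultimately have e: "norm (bc mu (Suc n)) = norm (bc mu n) / (real (Suc n) * norm z)"
    by (simp add: eq_divide_eq)
  have "norm (bc mu (Suc n) * w ^ Suc n) = norm (bc mu n) * norm w ^ n * (norm w / (real (Suc n) * norm z))"
    by (simp add: e norm_mult norm_power field_simps)
  also have "\<dots> \<le> norm (bc mu n) * norm w ^ n * (1/2)"
  proof (rule mult_left_mono)
    have "2 * norm w \<le> real (Suc n) * norm z"
    proof -
      have "real (Suc n) * 1 \<le> real (Suc n) * norm z" using nz1 by (intro mult_left_mono) auto
      moreover have "2 * norm w \<le> real (Suc n) * 1" using n1 abs_ge_zero[of mu] by simp
      ultimately show ?thesis by (rule order_trans[rotated])
    qed
    moreover have pos: "real (Suc n) * norm z > 0" using nz1 by (intro mult_pos_pos) auto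
    ultimately show "norm w / (real (Suc n) * norm z) \<le> 1/2" by (simp add: pos_divide_le_eq[OF pos])
  qed simp
  finally show "norm (bc mu (Suc n) * w ^ Suc n) \<le> 1/2 * norm (bc mu n * w ^ n)"
    by (simp add: norm_mult norm_power)
qed simp

lemma diffs_bc: "diffs (bc mu) = (\<lambda>m. - bc (mu + 1) m)"
proof
  fix m
  have e: "of_nat (Suc m) + complex_of_real mu + 1 = of_nat m + complex_of_real (mu + 1) + 1" by simp
  have f: "(fact (Suc m) :: complex) = of_nat (Suc m) * fact m" by (rule fact_Suc)
  have nz: "(of_nat (Suc m) :: complex) \<noteq> 0" "(fact m :: complex) \<noteq> 0" by (metis of_nat_eq_0_iff nat.distinct(1)) simp
  show "diffs (bc mu) m = - bc (mu + 1) m"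
    unfolding diffs_def bc_def e f using nz by (simp del: of_nat_Suc fact_Suc)
qed

lemma BT_deriv: "(BT mu has_field_derivative - BT (mu + 1) w) (at w)"
proof -
  have "(BT mu has_field_derivative (\<Sum>n. diffs (bc mu) n * w^n)) (at w)"
    unfolding BT_def by (rule termdiffs_strong_converges_everywhere[OF bc_summable])
  moreover have "(\<Sum>n. diffs (bc mu) n * w^n) = - BT (mu + 1) w"
    unfolding diffs_bc BT_def using suminf_minus[OF bc_summable[of "mu+1" w]] by simp
  ultimately show ?thesis by simp
qed

lemma besselJ_BT: "besselJ nu z = (z/2) powr complex_of_real nu * BT nu ((z/2)^2)"
proof -
  have "(z/2)^(2*m) = ((z/2)^2)^m" for m by (rule power_mult)
  thus ?thesis unfolding besselJ_def BT_def bc_def by (simp add: mult_ac)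
qed

lemma BT_rec: "BT (mu - 1) w + w * BT (mu + 1) w = complex_of_real mu * BT mu w"
proof -
  have s1: "(\<lambda>m. bc (mu - 1) m * w^m) sums BT (mu - 1) w" unfolding BT_def using bc_summable summable_sums by blast
  have s2: "(\<lambda>m. w * (bc (mu + 1) m * w^m)) sums (w * BT (mu + 1) w)" unfolding BT_def
    using bc_summable summable_sums sums_mult by blast
  hence s2': "(\<lambda>m. (if m = 0 then 0 else w * (bc (mu + 1) (m - 1) * w^(m - 1)))) sums (w * BT (mu + 1) w)"
    using sums_Suc_iff[where f="\<lambda>m. (if m = 0 then 0 else w * (bc (mu + 1) (m - 1) * w^(m - 1)))"] by simp
  have s3: "(\<lambda>m. complex_of_real mu * (bc mu m * w^m)) sums (complex_of_real mu * BT mu w)"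
    unfolding BT_def using bc_summable summable_sums sums_mult by blast
  have eq: "bc (mu - 1) m * w^m + (if m = 0 then 0 else w * (bc (mu + 1) (m - 1) * w^(m - 1)))
      = complex_of_real mu * (bc mu m * w^m)" for m
  proof -
    have r: "(of_nat m + complex_of_real mu) * rGamma (of_nat m + complex_of_real mu + 1) = rGamma (of_nat m + complex_of_real mu)"
      using rGamma_plus1[of "of_nat m + complex_of_real mu"] by simp
    have a: "bc (mu - 1) m = (-1)^m * rGamma (of_nat m + complex_of_real mu) / fact m"
      unfolding bc_def by simp
    show ?thesis
    proof (cases m)
      case 0 thus ?thesis using r unfolding a bc_def by simp
    next
      case (Suc k)
      have b: "bc (mu + 1) k = (-1)^k * rGamma (of_nat m + complex_of_real mu + 1) / fact k"
        unfolding bc_def Suc by (simp add: add_ac)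
      have f: "(fact m :: complex) = of_nat m * fact k" using Suc by (simp del: of_nat_Suc)
      have nz: "(of_nat m :: complex) \<noteq> 0" "(fact k :: complex) \<noteq> 0" using Suc by (metis of_nat_eq_0_iff nat.distinct(1)) simp
      have wm: "w^m = w * w^k" "(-1::complex)^m = - ((-1)^k)" using Suc by simp_all
      have "bc (mu - 1) m * w^m + w * (bc (mu + 1) k * w^k)
          = (-1)^m * w^m * (rGamma (of_nat m + complex_of_real mu) - of_nat m * rGamma (of_nat m + complex_of_real mu + 1)) / fact m"
        unfolding a b f wm using nz by (simp add: field_simps)
      also have "\<dots> = complex_of_real mu * (bc mu m * w^m)"
        unfolding bc_def r[symmetric] by (simp add: field_simps)
      finally show ?thesis using Suc by simp
    qed
  qed
  have "(\<lambda>m. bc (mu - 1) m * w^m + (if m = 0 then 0 else w * (bc (mu + 1) (m - 1) * w^(m - 1))))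
       sums (BT (mu - 1) w + w * BT (mu + 1) w)" using sums_add[OF s1 s2'] .
  hence "(\<lambda>m. complex_of_real mu * (bc mu m * w^m)) sums (BT (mu - 1) w + w * BT (mu + 1) w)"
    unfolding eq .
  thus ?thesis using s3 sums_unique2 by blast
qed



lemma cpowr_minus1: "(z::complex) \<noteq> 0 \<Longrightarrow> z powr (s - 1) = z powr s / z"
proof -
  assume z: "z \<noteq> 0"
  have "z powr s = z powr (s - 1) * z powr 1" using powr_add[of z "s - 1" 1] by simp
  thus ?thesis using z by simp
qed

lemma cpowr_plus1: "(z::complex) \<noteq> 0 \<Longrightarrow> z powr (s + 1) = z powr s * z"
  using powr_add[of z s 1] by simp

lemma powr_real_deriv:
  assumes y: "y \<noteq> 0"
  shows "((\<lambda>t. complex_of_real t powr s) has_vector_derivative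
           (s * complex_of_real y powr s / complex_of_real y)) (at y)"
proof (cases "y > 0")
  case True
  have "complex_of_real y \<notin> \<real>\<^sub>\<le>\<^sub>0" using True by (auto simp: nonpos_Reals_def)
  hence "((\<lambda>z. z powr s) has_field_derivative (s * complex_of_real y powr (s - 1))) (at (complex_of_real y))"
    by (rule has_field_derivative_powr)
  hence "((\<lambda>t. complex_of_real t powr s) has_vector_derivative (s * complex_of_real y powr (s - 1))) (at y)"
    by (rule has_vector_derivative_real_field)
  thus ?thesis using y by (simp add: cpowr_minus1)
next
  case False
  hence yn: "y < 0" using y by simp
  define G where "G z = exp (s * (Ln (- z) + \<i> * pi))" for z
  have nn: "- complex_of_real y \<notin> \<real>\<^sub>\<le>\<^sub>0" using yn by (auto simp: nonpos_Reals_def)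
  have L: "((\<lambda>z. Ln (- z)) has_field_derivative inverse (- complex_of_real y) * (-1)) (at (complex_of_real y))"
    by (rule DERIV_chain2[of Ln _ "\<lambda>z. - z", OF has_field_derivative_Ln[OF nn]]) (auto intro!: derivative_eq_intros)
  have L2: "((\<lambda>z. s * (Ln (- z) + \<i> * pi)) has_field_derivative s * (inverse (- complex_of_real y) * (-1))) (at (complex_of_real y))"
    using DERIV_cmult[OF DERIV_add[OF L DERIV_const[of "\<i> * pi"]], of s] by simp
  have "(G has_field_derivative G (complex_of_real y) * (s * (inverse (- complex_of_real y) * (-1)))) (at (complex_of_real y))"
    unfolding G_def by (rule DERIV_chain2[of exp _ "\<lambda>z. s * (Ln (- z) + \<i> * pi)", OF DERIV_exp L2])
  hence d: "((\<lambda>t. G (complex_of_real t)) has_vector_derivative G (complex_of_real y) * (s * (inverse (- complex_of_real y) * (-1)))) (at y)"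
    by (rule has_vector_derivative_real_field)
  have eqG: "G (complex_of_real t) = complex_of_real t powr s" if "t < 0" for t
  proof -
    have "Ln (complex_of_real t) = complex_of_real (ln \<bar>t\<bar>) + pi * \<i>" using Ln_of_real'[of t] that by simp
    moreover have "Ln (- complex_of_real t) = complex_of_real (ln \<bar>t\<bar>)"
      using Ln_of_real[of "-t"] that by simp
    ultimately show ?thesis unfolding G_def powr_def using that by (simp add: mult_ac)
  qed
  have "((\<lambda>t. complex_of_real t powr s) has_vector_derivative G (complex_of_real y) * (s * (inverse (- complex_of_real y) * (-1)))) (at y)"
    by (rule has_vector_derivative_transform_within_open[OF d, of "{..<0}"]) (use yn eqG in auto)
  thus ?thesis using eqG[OF yn] y by (simp add: field_simps)
qed

abbreviation Jr :: "real \<Rightarrow> real \<Rightarrow> complex" where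
  "Jr mu y \<equiv> besselJ mu (complex_of_real y)"

lemma Jr_BT: "Jr mu y = complex_of_real (y/2) powr complex_of_real mu * BT mu ((complex_of_real (y/2))^2)"
  unfolding besselJ_BT by simp

lemma Jr_deriv:
  assumes y: "y \<noteq> 0"
  shows "((Jr mu) has_vector_derivative
           (complex_of_real mu / complex_of_real y * Jr mu y - Jr (mu + 1) y)) (at y)"
proof -
  have y2: "y/2 \<noteq> 0" using y by simp
  have d1: "((\<lambda>t. complex_of_real (t/2) powr complex_of_real mu) has_vector_derivative
      ((1/2) *\<^sub>R (complex_of_real mu * complex_of_real (y/2) powr complex_of_real mu / complex_of_real (y/2)))) (at y)"
  proof -
    have a: "((\<lambda>t::real. t/2) has_vector_derivative (1/2)) (at y)"
      unfolding has_real_derivative_iff_has_vector_derivative[symmetric] by (auto intro!: derivative_eq_intros)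
    show ?thesis using vector_diff_chain_at[OF a powr_real_deriv[OF y2, of "complex_of_real mu"]]
      by (simp add: o_def)
  qed
  have "((\<lambda>z. BT mu ((z/2)^2)) has_field_derivative (- BT (mu + 1) ((complex_of_real y/2)^2)) * (of_nat 2 * (complex_of_real y/2)^1 * (1/2))) (at (complex_of_real y))"
    by (rule DERIV_chain2[OF BT_deriv] derivative_eq_intros refl | simp)+
  hence d2: "((\<lambda>t. BT mu ((complex_of_real (t/2))^2)) has_vector_derivative (- BT (mu + 1) ((complex_of_real (y/2))^2)) * (complex_of_real (y/2))) (at y)"
    using has_vector_derivative_real_field[where f="\<lambda>z. BT mu ((z/2)^2)"] by simp
  have "((Jr mu) has_vector_derivative
     (complex_of_real (y/2) powr complex_of_real mu * ((- BT (mu + 1) ((complex_of_real (y/2))^2)) * (complex_of_real (y/2)))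
     + ((1/2) *\<^sub>R (complex_of_real mu * complex_of_real (y/2) powr complex_of_real mu / complex_of_real (y/2))) * BT mu ((complex_of_real (y/2))^2))) (at y)"
    unfolding Jr_BT by (rule has_vector_derivative_mult[OF d1 d2])
  moreover have "complex_of_real (y/2) powr complex_of_real mu * ((- BT (mu + 1) ((complex_of_real (y/2))^2)) * (complex_of_real (y/2)))
     + ((1/2) *\<^sub>R (complex_of_real mu * complex_of_real (y/2) powr complex_of_real mu / complex_of_real (y/2))) * BT mu ((complex_of_real (y/2))^2)
     = complex_of_real mu / complex_of_real y * Jr mu y - Jr (mu + 1) y"
  proof -
    have "complex_of_real (y/2) powr complex_of_real (mu + 1) = complex_of_real (y/2) powr complex_of_real mu * complex_of_real (y/2)"
      using cpowr_plus1[of "complex_of_real (y/2)" "complex_of_real mu"] y2 by simp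
    thus ?thesis unfolding Jr_BT using y by (simp add: field_simps scaleR_conv_of_real)
  qed
  ultimately show ?thesis by simp
qed

lemma Jr_rec:
  assumes y: "y \<noteq> 0"
  shows "Jr (mu - 1) y + Jr (mu + 1) y = 2 * complex_of_real mu / complex_of_real y * Jr mu y"
proof -
  define u where "u = complex_of_real (y/2)"
  have u: "u \<noteq> 0" unfolding u_def using y by simp
  have p1: "u powr complex_of_real (mu + 1) = u powr complex_of_real mu * u"
    using cpowr_plus1[OF u] by simp
  have p2: "u powr complex_of_real (mu - 1) = u powr complex_of_real mu / u"
    using cpowr_minus1[OF u] by simp
  have yu: "complex_of_real y = 2 * u" unfolding u_def by simp
  have "Jr (mu - 1) y + Jr (mu + 1) y = u powr complex_of_real mu / u * (BT (mu - 1) (u^2) + u^2 * BT (mu + 1) (u^2))"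
    unfolding Jr_BT u_def[symmetric] p1 p2 using u by (simp add: field_simps power2_eq_square)
  also have "\<dots> = u powr complex_of_real mu / u * (complex_of_real mu * BT mu (u^2))"
    by (simp add: BT_rec)
  also have "\<dots> = 2 * complex_of_real mu / complex_of_real y * Jr mu y"
  proof -
    have J: "Jr mu y = u powr complex_of_real mu * BT mu (u^2)" unfolding Jr_BT u_def by simp
    show ?thesis unfolding J using u yu by (simp add: field_simps)
  qed
  finally show ?thesis .
qed

lemma Jr_ibp_deriv:
  assumes y: "y \<noteq> 0"
  shows "((\<lambda>t. complex_of_real t powr complex_of_real (mu + 1) * Jr (mu + 1) t) has_vector_derivative
           (complex_of_real y powr complex_of_real (mu + 1) * Jr mu y)) (at y)"
proof -
  have "((\<lambda>t. complex_of_real t powr complex_of_real (mu + 1) * Jr (mu + 1) t) has_vector_derivative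
     (complex_of_real y powr complex_of_real (mu + 1) * (complex_of_real (mu + 1) / complex_of_real y * Jr (mu + 1) y - Jr (mu + 1 + 1) y)
      + complex_of_real (mu + 1) * complex_of_real y powr complex_of_real (mu + 1) / complex_of_real y * Jr (mu + 1) y)) (at y)"
    by (rule has_vector_derivative_mult[OF powr_real_deriv[OF y] Jr_deriv[OF y]])
  moreover have "Jr (mu + 1 - 1) y + Jr (mu + 1 + 1) y = 2 * complex_of_real (mu + 1) / complex_of_real y * Jr (mu + 1) y"
    by (rule Jr_rec[OF y])
  hence C: "Jr mu y = 2 * complex_of_real (mu + 1) / complex_of_real y * Jr (mu + 1) y - Jr (mu + 1 + 1) y"
    by (simp add: eq_diff_eq)
  have "complex_of_real y powr complex_of_real (mu + 1) * (complex_of_real (mu + 1) / complex_of_real y * Jr (mu + 1) y - Jr (mu + 1 + 1) y)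
      + complex_of_real (mu + 1) * complex_of_real y powr complex_of_real (mu + 1) / complex_of_real y * Jr (mu + 1) y
      = complex_of_real y powr complex_of_real (mu + 1) * Jr mu y"
    unfolding C by (simp add: algebra_simps)
  ultimately show ?thesis by simp
qed

lemma norm_Jr_abs: "norm (Jr mu (- y)) = norm (Jr mu y)"
proof -
  have "norm (complex_of_real (- y/2) powr complex_of_real mu) = norm (complex_of_real (y/2) powr complex_of_real mu)"
    by (simp add: norm_powr_real_powr')
  thus ?thesis unfolding Jr_BT by (simp add: norm_mult power2_eq_square)
qed



lemma energy_bound:
  fixes p q :: "real \<Rightarrow> real" and mu :: real
  assumes dp: "\<And>x. x > 0 \<Longrightarrow> (p has_real_derivative (mu / x * p x - q x)) (at x)"
    and dq: "\<And>x. x > 0 \<Longrightarrow> (q has_real_derivative (p x - (mu + 1) / x * q x)) (at x)"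
  shows "\<exists>K. \<forall>x\<ge>1. x * (p x)^2 \<le> K"
proof -
  define al where "al = mu + 1/2"
  define c where "c = mu^2 - 1/4"
  define r where "r x = q x - al * p x / x" for x
  define E where "E x = x * ((p x)^2 + (r x)^2)" for x
  define F where "F x = E x * exp (\<bar>c\<bar> / x)" for x
  have dE: "(E has_real_derivative (- 2 * c * p x * r x / x)) (at x)" if x: "x > 0" for x
    unfolding E_def r_def
    apply (rule derivative_eq_intros dp[OF x] dq[OF x] refl | use x in linarith)+
    unfolding al_def c_def using x by (simp add: field_simps power2_eq_square)
  have Enn: "E x \<ge> 0" if "x > 0" for x unfolding E_def using that by simp
  have dF: "\<exists>y. (F has_real_derivative y) (at x) \<and> y \<le> 0" if x: "x \<ge> 1" for x
  proof -
    have x0: "x > 0" using x by simp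
    have "(F has_real_derivative (- 2 * c * p x * r x / x) * exp (\<bar>c\<bar> / x) + E x * (exp (\<bar>c\<bar> / x) * (- \<bar>c\<bar> / x^2))) (at x)"
      unfolding F_def
      apply (rule derivative_eq_intros dE[OF x0] refl | use x0 in linarith)+
      by (simp add: power2_eq_square)
    moreover have "(- 2 * c * p x * r x / x) * exp (\<bar>c\<bar> / x) + E x * (exp (\<bar>c\<bar> / x) * (- \<bar>c\<bar> / x^2)) \<le> 0"
    proof -
      have "2 * \<bar>p x * r x\<bar> \<le> (p x)^2 + (r x)^2"
        using sum_squares_bound[of "\<bar>p x\<bar>" "\<bar>r x\<bar>"] by (simp add: abs_mult power2_eq_square)
      have a: "- 2 * c * p x * r x / x \<le> \<bar>c\<bar> * ((p x)^2 + (r x)^2) / x"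
      proof -
        have "- 2 * c * p x * r x \<le> \<bar>c\<bar> * (2 * \<bar>p x * r x\<bar>)"
          proof -
          have "- 2 * c * p x * r x = 2 * (- c * (p x * r x))" by simp
          also have "\<dots> \<le> 2 * \<bar>- c * (p x * r x)\<bar>" by simp
          also have "\<dots> = \<bar>c\<bar> * (2 * \<bar>p x * r x\<bar>)" by (simp add: abs_mult)
          finally show ?thesis .
        qed
        also have "\<dots> \<le> \<bar>c\<bar> * ((p x)^2 + (r x)^2)"
          using \<open>2 * \<bar>p x * r x\<bar> \<le> _\<close> by (intro mult_left_mono) auto
        finally have "- 2 * c * p x * r x \<le> \<bar>c\<bar> * ((p x)^2 + (r x)^2)" .
        hence "(- 2 * c * p x * r x) / x \<le> (\<bar>c\<bar> * ((p x)^2 + (r x)^2)) / x"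
          using x0 by (intro divide_right_mono) auto
        thus ?thesis by simp
      qed
      have b: "E x * (- \<bar>c\<bar> / x^2) = - (\<bar>c\<bar> * ((p x)^2 + (r x)^2) / x)"
        unfolding E_def using x0 by (simp add: power2_eq_square field_simps)
      have "(- 2 * c * p x * r x / x) * exp (\<bar>c\<bar> / x) + E x * (exp (\<bar>c\<bar> / x) * (- \<bar>c\<bar> / x^2))
         = (- 2 * c * p x * r x / x) * exp (\<bar>c\<bar> / x) + exp (\<bar>c\<bar> / x) * (E x * (- \<bar>c\<bar> / x^2))"
        by (simp only: mult_ac)
      also have "\<dots> = (- 2 * c * p x * r x / x) * exp (\<bar>c\<bar> / x) + exp (\<bar>c\<bar> / x) * (- (\<bar>c\<bar> * ((p x)^2 + (r x)^2) / x))"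
        by (simp only: b)
      also have "\<dots> = exp (\<bar>c\<bar> / x) * ((- 2 * c * p x * r x / x) - \<bar>c\<bar> * ((p x)^2 + (r x)^2) / x)"
        by (simp only: algebra_simps)
      also have "\<dots> \<le> 0" using a by (intro mult_nonneg_nonpos) auto
      finally show ?thesis .
    qed
    ultimately show ?thesis by blast
  qed
  show ?thesis
  proof (intro exI allI impI)
    fix x :: real assume x: "x \<ge> 1"
    have "F x \<le> F 1" using DERIV_nonpos_imp_nonincreasing[of 1 x F] dF x by auto
    moreover have "E x \<le> F x"
    proof -
      have "E x * 1 \<le> E x * exp (\<bar>c\<bar> / x)" using Enn[of x] x by (intro mult_left_mono) auto
      thus ?thesis unfolding F_def by simp
    qed
    moreover have "x * (p x)^2 \<le> E x" unfolding E_def using x by (simp add: algebra_simps)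
    ultimately show "x * (p x)^2 \<le> F 1" by linarith
  qed
qed

lemma Jr_deriv_real:
  assumes "x > 0"
  shows "((\<lambda>t. Re (Jr mu t)) has_real_derivative (mu / x * Re (Jr mu x) - Re (Jr (mu + 1) x))) (at x)"
    and "((\<lambda>t. Im (Jr mu t)) has_real_derivative (mu / x * Im (Jr mu x) - Im (Jr (mu + 1) x))) (at x)"
proof -
  have x: "x \<noteq> 0" using assms by simp
  have e: "complex_of_real mu / complex_of_real x = complex_of_real (mu / x)" by simp
  have d: "((Jr mu) has_vector_derivative (complex_of_real (mu / x) * Jr mu x - Jr (mu + 1) x)) (at x)"
    using Jr_deriv[OF x, of mu] unfolding e .
  show "((\<lambda>t. Re (Jr mu t)) has_real_derivative (mu / x * Re (Jr mu x) - Re (Jr (mu + 1) x))) (at x)"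
    using bounded_linear.has_vector_derivative[OF bounded_linear_Re d]
    by (simp add: has_real_derivative_iff_has_vector_derivative)
  show "((\<lambda>t. Im (Jr mu t)) has_real_derivative (mu / x * Im (Jr mu x) - Im (Jr (mu + 1) x))) (at x)"
    using bounded_linear.has_vector_derivative[OF bounded_linear_Im d]
    by (simp add: has_real_derivative_iff_has_vector_derivative)
qed

lemma Jr_deriv_real2:
  assumes "x > 0"
  shows "((\<lambda>t. Re (Jr (mu + 1) t)) has_real_derivative (Re (Jr mu x) - (mu + 1) / x * Re (Jr (mu + 1) x))) (at x)"
    and "((\<lambda>t. Im (Jr (mu + 1) t)) has_real_derivative (Im (Jr mu x) - (mu + 1) / x * Im (Jr (mu + 1) x))) (at x)"
proof -
  have x: "x \<noteq> 0" using assms by simp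
  have r: "Jr (mu + 1 - 1) x + Jr (mu + 1 + 1) x = 2 * complex_of_real (mu + 1) / complex_of_real x * Jr (mu + 1) x"
    by (rule Jr_rec[OF x])
  have r2: "Jr (mu + 1 + 1) x = 2 * complex_of_real ((mu + 1) / x) * Jr (mu + 1) x - Jr mu x"
    using r by (simp add: eq_diff_eq add.commute)
  have e: "complex_of_real (mu + 1) / complex_of_real x = complex_of_real ((mu + 1) / x)" by simp
  have d: "((Jr (mu + 1)) has_vector_derivative (Jr mu x - complex_of_real ((mu + 1) / x) * Jr (mu + 1) x)) (at x)"
  proof -
    have d0: "((Jr (mu + 1)) has_vector_derivative (complex_of_real ((mu + 1) / x) * Jr (mu + 1) x - (2 * complex_of_real ((mu + 1) / x) * Jr (mu + 1) x - Jr mu x))) (at x)"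
      using Jr_deriv[OF x, of "mu + 1"] unfolding e r2 .
    have eq: "complex_of_real ((mu + 1) / x) * Jr (mu + 1) x - (2 * complex_of_real ((mu + 1) / x) * Jr (mu + 1) x - Jr mu x)
       = Jr mu x - complex_of_real ((mu + 1) / x) * Jr (mu + 1) x" by (simp add: algebra_simps)
    show ?thesis using d0 by (simp only: eq)
  qed
  show "((\<lambda>t. Re (Jr (mu + 1) t)) has_real_derivative (Re (Jr mu x) - (mu + 1) / x * Re (Jr (mu + 1) x))) (at x)"
    using bounded_linear.has_vector_derivative[OF bounded_linear_Re d]
    by (simp add: has_real_derivative_iff_has_vector_derivative)
  show "((\<lambda>t. Im (Jr (mu + 1) t)) has_real_derivative (Im (Jr mu x) - (mu + 1) / x * Im (Jr (mu + 1) x))) (at x)"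
    using bounded_linear.has_vector_derivative[OF bounded_linear_Im d]
    by (simp add: has_real_derivative_iff_has_vector_derivative)
qed

lemma Jr_decay: "\<exists>C\<ge>0. \<forall>y. 1 \<le> \<bar>y\<bar> \<longrightarrow> norm (Jr mu y) \<le> C / sqrt \<bar>y\<bar>"
proof -
  obtain K1 where K1: "\<forall>x\<ge>1. x * (Re (Jr mu x))^2 \<le> K1"
    using energy_bound[of "\<lambda>t. Re (Jr mu t)" mu "\<lambda>t. Re (Jr (mu + 1) t)"] Jr_deriv_real(1) Jr_deriv_real2(1) by blast
  obtain K2 where K2: "\<forall>x\<ge>1. x * (Im (Jr mu x))^2 \<le> K2"
    using energy_bound[of "\<lambda>t. Im (Jr mu t)" mu "\<lambda>t. Im (Jr (mu + 1) t)"] Jr_deriv_real(2) Jr_deriv_real2(2) by blast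
  define C where "C = sqrt (\<bar>K1\<bar> + \<bar>K2\<bar>)"
  have pos: "norm (Jr mu x) \<le> C / sqrt x" if x: "x \<ge> 1" for x
  proof -
    have "x * (norm (Jr mu x))^2 = x * (Re (Jr mu x))^2 + x * (Im (Jr mu x))^2"
      by (simp add: cmod_power2 algebra_simps)
    also have "\<dots> \<le> \<bar>K1\<bar> + \<bar>K2\<bar>" using K1 K2 x by fastforce
    finally have h: "x * (norm (Jr mu x))^2 \<le> \<bar>K1\<bar> + \<bar>K2\<bar>" .
    have "sqrt x * norm (Jr mu x) = sqrt (x * (norm (Jr mu x))^2)" using x by (simp add: real_sqrt_mult)
    also have "\<dots> \<le> C" unfolding C_def using h by (rule real_sqrt_le_mono)
    finally show ?thesis using x by (simp add: field_simps)
  qed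
  show ?thesis
  proof (intro exI conjI allI impI)
    show "C \<ge> 0" unfolding C_def by simp
    fix y :: real assume y: "1 \<le> \<bar>y\<bar>"
    show "norm (Jr mu y) \<le> C / sqrt \<bar>y\<bar>"
    proof (cases "y \<ge> 0")
      case True thus ?thesis using pos y by simp
    next
      case False
      hence "norm (Jr mu y) = norm (Jr mu (- y))" using norm_Jr_abs[of mu "-y"] by simp
      thus ?thesis using pos[of "-y"] y False by simp
    qed
  qed
qed



fun Ck :: "real \<Rightarrow> real \<Rightarrow> nat \<Rightarrow> (real \<Rightarrow> complex) \<Rightarrow> bool" where
  "Ck a b 0 h = True"
| "Ck a b (Suc n) h = (\<exists>h'. (\<forall>x\<in>{a..b}. (h has_vector_derivative h' x) (at x within {a..b})) \<and> Ck a b n h')"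

definition sm :: "real \<Rightarrow> real \<Rightarrow> (real \<Rightarrow> complex) \<Rightarrow> bool" where
  "sm a b h \<longleftrightarrow> (\<forall>n. Ck a b n h)"

lemma Ck_mono: "Ck a b (Suc n) h \<Longrightarrow> Ck a b n h"
proof (induction n arbitrary: h)
  case 0 thus ?case by simp
next
  case (Suc n)
  then obtain h' where h': "\<forall>x\<in>{a..b}. (h has_vector_derivative h' x) (at x within {a..b})" "Ck a b (Suc n) h'"
    by auto
  thus ?case using Suc.IH by auto
qed

lemma Ck_cong: "Ck a b n h \<Longrightarrow> (\<And>x. x \<in> {a..b} \<Longrightarrow> h x = k x) \<Longrightarrow> Ck a b n k"
proof (induction n arbitrary: h k)
  case 0 thus ?case by simp
next
  case (Suc n)
  then obtain h' where h': "\<forall>x\<in>{a..b}. (h has_vector_derivative h' x) (at x within {a..b})" "Ck a b n h'"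
    by auto
  have "\<forall>x\<in>{a..b}. (k has_vector_derivative h' x) (at x within {a..b})"
    using h'(1) Suc.prems(2) by (metis has_vector_derivative_transform)
  thus ?case using h'(2) by auto
qed

lemma Ck_const: "Ck a b n (\<lambda>x. c)"
proof (induction n arbitrary: c)
  case (Suc n) thus ?case by (auto intro!: exI[of _ "\<lambda>x. 0"])
qed simp

lemma Ck_add: "Ck a b n f \<Longrightarrow> Ck a b n g \<Longrightarrow> Ck a b n (\<lambda>x. f x + g x)"
proof (induction n arbitrary: f g)
  case (Suc n)
  then obtain f' g' where f': "\<forall>x\<in>{a..b}. (f has_vector_derivative f' x) (at x within {a..b})" "Ck a b n f'"
    and g': "\<forall>x\<in>{a..b}. (g has_vector_derivative g' x) (at x within {a..b})" "Ck a b n g'"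
    by auto
  show ?case using f' g' Suc.IH[OF f'(2) g'(2)]
    by (auto intro!: exI[of _ "\<lambda>x. f' x + g' x"] has_vector_derivative_add)
qed simp

lemma Ck_minus: "Ck a b n f \<Longrightarrow> Ck a b n (\<lambda>x. - f x)"
proof (induction n arbitrary: f)
  case (Suc n)
  then obtain f' where f': "\<forall>x\<in>{a..b}. (f has_vector_derivative f' x) (at x within {a..b})" "Ck a b n f'"
    by auto
  show ?case using f' Suc.IH[OF f'(2)]
    by (auto intro!: exI[of _ "\<lambda>x. - f' x"] has_vector_derivative_minus)
qed simp

lemma Ck_mult: "Ck a b n f \<Longrightarrow> Ck a b n g \<Longrightarrow> Ck a b n (\<lambda>x. f x * g x)"
proof (induction n arbitrary: f g)
  case (Suc n)
  then obtain f' g' where f': "\<forall>x\<in>{a..b}. (f has_vector_derivative f' x) (at x within {a..b})" "Ck a b n f'"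
    and g': "\<forall>x\<in>{a..b}. (g has_vector_derivative g' x) (at x within {a..b})" "Ck a b n g'"
    by auto
  have fn: "Ck a b n f" "Ck a b n g" using Suc.prems Ck_mono by blast+
  have "Ck a b n (\<lambda>x. f x * g' x + f' x * g x)"
    by (rule Ck_add[OF Suc.IH[OF fn(1) g'(2)] Suc.IH[OF f'(2) fn(2)]])
  thus ?case using f' g'
    by (auto intro!: exI[of _ "\<lambda>x. f x * g' x + f' x * g x"] has_vector_derivative_mult)
qed simp

lemma Ck_inverse:
  assumes "\<And>x. x \<in> {a..b} \<Longrightarrow> h x \<noteq> 0"
  shows "Ck a b n h \<Longrightarrow> Ck a b n (\<lambda>x. inverse (h x))"
proof (induction n)
  case (Suc n)
  then obtain h' where h': "\<forall>x\<in>{a..b}. (h has_vector_derivative h' x) (at x within {a..b})" "Ck a b n h'"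
    by auto
  have hn: "Ck a b n h" using Suc.prems Ck_mono by blast
  have c: "Ck a b n (\<lambda>x. - (h' x * (inverse (h x) * inverse (h x))))"
    by (intro Ck_minus Ck_mult h'(2) Suc.IH[OF hn])
  have "((\<lambda>x. inverse (h x)) has_vector_derivative - (h' x * (inverse (h x) * inverse (h x)))) (at x within {a..b})"
    if x: "x \<in> {a..b}" for x
  proof -
    have "(inverse has_field_derivative - (inverse (h x) * inverse (h x))) (at (h x) within h ` {a..b})"
      using DERIV_inverse[of "h x"] assms[OF x] by (simp add: has_field_derivative_at_within power2_eq_square)
    from field_vector_diff_chain_within[OF h'(1)[rule_format, OF x] this]
    show ?thesis by (simp add: o_def)
  qed
  thus ?case using c by (auto intro!: exI[of _ "\<lambda>x. - (h' x * (inverse (h x) * inverse (h x)))"])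
qed simp

lemma Ck_real:
  fixes g dg :: "real \<Rightarrow> real"
  assumes "\<And>x. x \<in> {a..b} \<Longrightarrow> (g has_real_derivative dg x) (at x within {a..b})"
    and "Ck a b n (\<lambda>x. complex_of_real (dg x))"
  shows "Ck a b (Suc n) (\<lambda>x. complex_of_real (g x))"
  using assms by (auto intro!: exI[of _ "\<lambda>x. complex_of_real (dg x)"] has_vector_derivative_of_real)

lemma Ck_powr:
  fixes g dg :: "real \<Rightarrow> real"
  assumes dg: "\<And>x. x \<in> {a..b} \<Longrightarrow> (g has_real_derivative dg x) (at x within {a..b})"
    and smg: "sm a b (\<lambda>x. complex_of_real (g x))"
    and smdg: "sm a b (\<lambda>x. complex_of_real (dg x))"
    and nz: "\<And>x. x \<in> {a..b} \<Longrightarrow> g x \<noteq> 0"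
  shows "Ck a b n (\<lambda>x. complex_of_real (g x) powr s)"
proof (induction n)
  case (Suc n)
  define h' where "h' x = complex_of_real (dg x) * (s * complex_of_real (g x) powr s * inverse (complex_of_real (g x)))" for x
  have c: "Ck a b n h'" unfolding h'_def
    using smdg smg nz unfolding sm_def
    by (intro Ck_mult Ck_const Ck_inverse Suc.IH) auto
  have "((\<lambda>x. complex_of_real (g x) powr s) has_vector_derivative h' x) (at x within {a..b})"
    if x: "x \<in> {a..b}" for x
  proof -
    have d1: "(g has_vector_derivative dg x) (at x within {a..b})"
      using dg[OF x] by (simp add: has_real_derivative_iff_has_vector_derivative)
    have d2: "((\<lambda>t. complex_of_real t powr s) has_vector_derivative
           (s * complex_of_real (g x) powr s / complex_of_real (g x))) (at (g x) within g ` {a..b})"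
      using powr_real_deriv[OF nz[OF x], of s] by (rule has_vector_derivative_at_within)
    from vector_diff_chain_within[OF d1 d2]
    show ?thesis unfolding h'_def by (simp add: o_def scaleR_conv_of_real divide_inverse)
  qed
  thus ?case using c by (auto intro!: exI[of _ h'])
qed simp



lemma smooth_sm:
  assumes ab: "a < b" and sf: "smooth_on_interval a b f"
  shows "sm a b (\<lambda>x. complex_of_real (f x))"
    and "sm a b (\<lambda>x. complex_of_real (dI a b f x))"
    and "\<And>x. x \<in> {a..b} \<Longrightarrow> (f has_real_derivative dI a b f x) (at x within {a..b})"
proof -
  obtain D where D0: "\<forall>x\<in>{a..b}. D 0 x = f x"
    and DS: "\<forall>n. \<forall>x\<in>{a..b}. (D n has_real_derivative D (Suc n) x) (at x within {a..b})"
    using sf unfolding smooth_on_interval_def by blast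
  have ck: "Ck a b n (\<lambda>x. complex_of_real (D m x))" for n m
  proof (induction n arbitrary: m)
    case (Suc n)
    show ?case using DS Suc.IH[of "Suc m"]
      by (auto intro!: exI[of _ "\<lambda>x. complex_of_real (D (Suc m) x)"] has_vector_derivative_of_real)
  qed simp
  have df: "(f has_real_derivative D 1 x) (at x within {a..b})" if x: "x \<in> {a..b}" for x
  proof -
    have "(D 0 has_real_derivative D 1 x) (at x within {a..b})" using DS x by simp
    thus ?thesis unfolding has_real_derivative_iff_has_vector_derivative
      using has_vector_derivative_transform[of x "{a..b}" f "D 0"] D0 x by auto
  qed
  have dI1: "dI a b f x = D 1 x" if x: "x \<in> {a..b}" for x
    unfolding dI_def
    using vector_derivative_within_closed_interval[OF ab x] df[OF x]
    unfolding has_real_derivative_iff_has_vector_derivative by simp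
  show "sm a b (\<lambda>x. complex_of_real (f x))" unfolding sm_def
  proof
    fix n show "Ck a b n (\<lambda>x. complex_of_real (f x))" by (rule Ck_cong[OF ck[of n 0]]) (use D0 in auto)
  qed
  show "sm a b (\<lambda>x. complex_of_real (dI a b f x))" unfolding sm_def
  proof
    fix n show "Ck a b n (\<lambda>x. complex_of_real (dI a b f x))" by (rule Ck_cong[OF ck[of n 1]]) (use dI1 in auto)
  qed
  show "\<And>x. x \<in> {a..b} \<Longrightarrow> (f has_real_derivative dI a b f x) (at x within {a..b})"
    using df dI1 by simp
qed

lemma sm_dI:
  assumes ab: "a < b" and h: "sm a b h"
  shows "sm a b (dI a b h)"
    and "\<And>x. x \<in> {a..b} \<Longrightarrow> (h has_vector_derivative dI a b h x) (at x within {a..b})"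
proof -
  have *: "Ck a b n (dI a b h) \<and> (\<forall>x\<in>{a..b}. (h has_vector_derivative dI a b h x) (at x within {a..b}))" for n
  proof -
    obtain h' where h': "\<forall>x\<in>{a..b}. (h has_vector_derivative h' x) (at x within {a..b})" "Ck a b n h'"
    proof -
      have "Ck a b (Suc n) h" using h unfolding sm_def by blast
      thus ?thesis using that by auto
    qed
    have e: "dI a b h x = h' x" if "x \<in> {a..b}" for x
      unfolding dI_def using vector_derivative_within_closed_interval[OF ab that] h'(1) that by blast
    show ?thesis using h' e by (auto intro: Ck_cong)
  qed
  show "sm a b (dI a b h)" unfolding sm_def using * by blast
  show "\<And>x. x \<in> {a..b} \<Longrightarrow> (h has_vector_derivative dI a b h x) (at x within {a..b})" using * by blast
qed

lemma sm_cont: "a < b \<Longrightarrow> sm a b h \<Longrightarrow> continuous_on {a..b} h"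
proof -
  assume ab: "a < b" and h: "sm a b h"
  show ?thesis unfolding continuous_on_eq_continuous_within
    using sm_dI(2)[OF ab h] has_vector_derivative_continuous by blast
qed

lemma sm_mult: "sm a b f \<Longrightarrow> sm a b g \<Longrightarrow> sm a b (\<lambda>x. f x * g x)"
  unfolding sm_def using Ck_mult by blast

lemma sm_inverse: "sm a b f \<Longrightarrow> (\<And>x. x \<in> {a..b} \<Longrightarrow> f x \<noteq> 0) \<Longrightarrow> sm a b (\<lambda>x. inverse (f x))"
  unfolding sm_def using Ck_inverse by blast

definition Sop :: "real \<Rightarrow> real \<Rightarrow> (real \<Rightarrow> real) \<Rightarrow> real \<Rightarrow> (real \<Rightarrow> complex) \<Rightarrow> real \<Rightarrow> complex" where
  "Sop a b g s h x = complex_of_real (g x) powr complex_of_real s *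
     dI a b (\<lambda>y. h y / (complex_of_real (g y) powr complex_of_real s * complex_of_real (dI a b g y))) x"

definition Hg :: "real \<Rightarrow> real \<Rightarrow> (real \<Rightarrow> real) \<Rightarrow> real \<Rightarrow> (real \<Rightarrow> complex) \<Rightarrow> real \<Rightarrow> complex" where
  "Hg a b g mu h w = integral {a..b} (\<lambda>x. h x * Jr mu (w * g x))"

definition Bd :: "real \<Rightarrow> real \<Rightarrow> (real \<Rightarrow> real) \<Rightarrow> real \<Rightarrow> (real \<Rightarrow> complex) \<Rightarrow> real \<Rightarrow> complex" where
  "Bd a b g mu h w = h b / complex_of_real (dI a b g b) * Jr mu (w * g b)
                   - h a / complex_of_real (dI a b g a) * Jr mu (w * g a)"

lemma sigma_Suc_Sop: "sigma a b nu g f (Suc k) = Sop a b g (nu + real (Suc k)) (sigma a b nu g f k)"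
  by (rule ext) (simp add: Sop_def)

context
  fixes a b :: real and g :: "real \<Rightarrow> real"
  assumes ab: "a < b" and smg: "smooth_on_interval a b g"
    and gnz: "\<forall>x\<in>{a..b}. g x \<noteq> 0" and dgnz: "\<forall>x\<in>{a..b}. dI a b g x \<noteq> 0"
begin

lemma smPow: "sm a b (\<lambda>x. complex_of_real (g x) powr s)"
proof -
  have "Ck a b n (\<lambda>x. complex_of_real (g x) powr s)" for n
    by (rule Ck_powr[OF smooth_sm(3)[OF ab smg] smooth_sm(1)[OF ab smg] smooth_sm(2)[OF ab smg]]) (use gnz in auto)
  thus ?thesis unfolding sm_def by blast
qed

lemma smQ: "sm a b (\<lambda>y. complex_of_real (g y) powr complex_of_real s * complex_of_real (dI a b g y))"
  by (rule sm_mult[OF smPow smooth_sm(2)[OF ab smg]])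

lemma Qnz: "y \<in> {a..b} \<Longrightarrow> complex_of_real (g y) powr complex_of_real s * complex_of_real (dI a b g y) \<noteq> 0"
  using gnz dgnz by simp

lemma smF: "sm a b h \<Longrightarrow> sm a b (\<lambda>y. h y / (complex_of_real (g y) powr complex_of_real s * complex_of_real (dI a b g y)))"
  unfolding divide_inverse by (intro sm_mult sm_inverse smQ Qnz)

lemma sm_Sop: "sm a b h \<Longrightarrow> sm a b (Sop a b g s h)"
  unfolding Sop_def
proof (intro sm_mult)
  assume h: "sm a b h"
  show "sm a b (\<lambda>x. complex_of_real (g x) powr complex_of_real s)"
    by (rule smPow)
  show "sm a b (dI a b (\<lambda>y. h y / (complex_of_real (g y) powr complex_of_real s * complex_of_real (dI a b g y))))"
    by (rule sm_dI(1)[OF ab smF[OF h]])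
qed

lemma sigma_sm: "smooth_on_interval a b f \<Longrightarrow> sm a b (sigma a b nu g f k)"
proof (induction k)
  case 0 thus ?case using smooth_sm(1)[OF ab] by simp
next
  case (Suc k) thus ?case unfolding sigma_Suc_Sop by (intro sm_Sop) auto
qed

end



context
  fixes a b :: real and g :: "real \<Rightarrow> real"
  assumes ab: "a < b" and smg: "smooth_on_interval a b g"
    and gnz: "\<forall>x\<in>{a..b}. g x \<noteq> 0" and dgnz: "\<forall>x\<in>{a..b}. dI a b g x \<noteq> 0"
begin

lemma ibp:
  assumes h: "sm a b h" and w: "w > 0" and s: "s = mu + 1"
  shows "Hg a b g mu h w = (Bd a b g s h w - Hg a b g s (Sop a b g s h) w) / complex_of_real w"
proof -
  define dg where "dg = dI a b g"
  define Q where "Q y = complex_of_real (g y) powr complex_of_real s * complex_of_real (dg y)" for y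
  define F where "F y = h y / Q y" for y
  define F' where "F' = dI a b F"
  define Phi where "Phi y = complex_of_real (w * g y) powr complex_of_real s * Jr s (w * g y)" for y
  define Phi' where "Phi' y = complex_of_real (w * dg y) * (complex_of_real (w * g y) powr complex_of_real s * Jr mu (w * g y))" for y
  define W where "W = complex_of_real w powr complex_of_real s"
  have Fe: "F = (\<lambda>y. h y / (complex_of_real (g y) powr complex_of_real s * complex_of_real (dI a b g y)))"
    unfolding F_def Q_def dg_def by simp
  have smF: "sm a b F" unfolding Fe by (rule smF[OF ab smg gnz dgnz h])
  have dF: "(F has_vector_derivative F' x) (at x within {a..b})" if "x \<in> {a..b}" for x
    unfolding F'_def using sm_dI(2)[OF ab smF that] .
  have cF': "continuous_on {a..b} F'" unfolding F'_def by (rule sm_cont[OF ab sm_dI(1)[OF ab smF]])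
  have cF: "continuous_on {a..b} F" by (rule sm_cont[OF ab smF])
  have dPhi: "(Phi has_vector_derivative Phi' x) (at x within {a..b})" if x: "x \<in> {a..b}" for x
  proof -
    have "(g has_real_derivative dg x) (at x within {a..b})"
      unfolding dg_def by (rule smooth_sm(3)[OF ab smg x])
    hence "((\<lambda>y. w * g y) has_real_derivative w * dg x) (at x within {a..b})"
      by (rule DERIV_cmult)
    hence d1: "((\<lambda>y. w * g y) has_vector_derivative w * dg x) (at x within {a..b})"
      by (simp add: has_real_derivative_iff_has_vector_derivative)
    have nz: "w * g x \<noteq> 0" using w gnz x by simp
    have d2: "((\<lambda>t. complex_of_real t powr complex_of_real s * Jr s t) has_vector_derivative
           (complex_of_real (w * g x) powr complex_of_real s * Jr mu (w * g x))) (at (w * g x) within (\<lambda>y. w * g y) ` {a..b})"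
      using Jr_ibp_deriv[OF nz, of mu] unfolding s[symmetric] by (rule has_vector_derivative_at_within)
    from vector_diff_chain_within[OF d1 d2]
    show ?thesis unfolding Phi_def Phi'_def by (simp add: o_def scaleR_conv_of_real)
  qed
  have cPhi: "continuous_on {a..b} Phi"
    unfolding continuous_on_eq_continuous_within using dPhi has_vector_derivative_continuous by blast
  have FTC: "((\<lambda>x. F x * Phi' x + F' x * Phi x) has_integral (F b * Phi b - F a * Phi a)) {a..b}"
    by (rule fundamental_theorem_of_calculus) (use ab dF dPhi in \<open>auto intro!: has_vector_derivative_mult\<close>)
  have int2: "(\<lambda>x. F' x * Phi x) integrable_on {a..b}"
    by (rule integrable_continuous_interval) (intro continuous_on_mult cF' cPhi)
  have I1: "((\<lambda>x. F x * Phi' x) has_integral (F b * Phi b - F a * Phi a - integral {a..b} (\<lambda>x. F' x * Phi x))) {a..b}"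
    using has_integral_diff[OF FTC integrable_integral[OF int2]] by simp
  have Wg: "complex_of_real (w * g y) powr complex_of_real s = W * complex_of_real (g y) powr complex_of_real s" for y
    unfolding W_def of_real_mult using w by (intro powr_times_real_left) auto
  have Qnz: "Q y \<noteq> 0" if "y \<in> {a..b}" for y unfolding Q_def dg_def using gnz dgnz that by simp
  have p1: "F x * Phi' x = (complex_of_real w * W) * (h x * Jr mu (w * g x))" if x: "x \<in> {a..b}" for x
  proof -
    have gz: "complex_of_real (g x) powr complex_of_real s \<noteq> 0" "complex_of_real (dg x) \<noteq> 0"
      using gnz dgnz x unfolding dg_def by auto
    show ?thesis unfolding F_def Phi'_def Wg Q_def using gz by (simp add: field_simps)
  qed
  have p2: "F' x * Phi x = W * (Sop a b g s h x * Jr s (w * g x))" for x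
    unfolding Sop_def F'_def Fe Phi_def Wg by (simp add: mult_ac)
  have p3: "F y * Phi y = W * (h y / complex_of_real (dI a b g y) * Jr s (w * g y))" if "y \<in> {a..b}" for y
  proof -
    have gz: "complex_of_real (g y) powr complex_of_real s \<noteq> 0" "complex_of_real (dg y) \<noteq> 0"
      using gnz dgnz that unfolding dg_def by auto
    show ?thesis unfolding F_def Phi_def Wg Q_def using gz by (simp add: field_simps dg_def)
  qed
  have e1: "integral {a..b} (\<lambda>x. F x * Phi' x) = (complex_of_real w * W) * Hg a b g mu h w"
    unfolding Hg_def by (subst integral_cong[OF p1]) auto
  have e2: "integral {a..b} (\<lambda>x. F' x * Phi x) = W * Hg a b g s (Sop a b g s h) w"
    unfolding Hg_def p2 by simp
  have e3: "F b * Phi b - F a * Phi a = W * Bd a b g s h w"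
    unfolding Bd_def using p3[of a] p3[of b] ab by (simp add: algebra_simps)
  have "(complex_of_real w * W) * Hg a b g mu h w = W * Bd a b g s h w - W * Hg a b g s (Sop a b g s h) w"
    using integral_unique[OF I1] unfolding e1 e2 e3 .
  hence "W * (complex_of_real w * Hg a b g mu h w + Hg a b g s (Sop a b g s h) w) = W * Bd a b g s h w"
    by (simp add: algebra_simps)
  moreover have "W \<noteq> 0" "complex_of_real w \<noteq> 0" unfolding W_def using w by auto
  ultimately have "complex_of_real w * Hg a b g mu h w + Hg a b g s (Sop a b g s h) w = Bd a b g s h w"
    by simp
  thus ?thesis using \<open>complex_of_real w \<noteq> 0\<close> by (simp add: eq_divide_eq algebra_simps)
qed

lemma g_cont: "continuous_on {a..b} g"
  unfolding continuous_on_eq_continuous_within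
  using smooth_sm(3)[OF ab smg] DERIV_continuous by blast

lemma Jr_cont: "continuous_on (- {0}) (Jr mu)"
proof (rule continuous_at_imp_continuous_on, rule ballI)
  fix y :: real assume "y \<in> - {0}"
  hence "y \<noteq> 0" by simp
  from has_vector_derivative_continuous[OF Jr_deriv[OF this, of mu]]
  show "isCont (Jr mu) y" by simp
qed

lemma Jg_cont: "w > 0 \<Longrightarrow> continuous_on {a..b} (\<lambda>x. Jr mu (w * g x))"
  by (rule continuous_on_compose2[OF Jr_cont]) (use gnz in \<open>auto intro!: continuous_intros g_cont\<close>)

lemma bound:
  assumes h: "sm a b h"
  shows "\<exists>C w0. \<forall>w\<ge>w0. norm (Hg a b g mu h w) \<le> C / sqrt w \<and> norm (Bd a b g mu h w) \<le> C / sqrt w"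
proof -
  have ne: "{a..b} \<noteq> {}" using ab by simp
  obtain xm where xm: "xm \<in> {a..b}" "\<forall>y\<in>{a..b}. \<bar>g xm\<bar> \<le> \<bar>g y\<bar>"
    using continuous_attains_inf[OF compact_Icc ne continuous_on_rabs[OF g_cont]] by blast
  define m where "m = \<bar>g xm\<bar>"
  have m: "m > 0" unfolding m_def using gnz xm by simp
  obtain xh where xh: "xh \<in> {a..b}" "\<forall>y\<in>{a..b}. norm (h y) \<le> norm (h xh)"
    using continuous_attains_sup[OF compact_Icc ne continuous_on_norm[OF sm_cont[OF ab h]]] by blast
  define M where "M = norm (h xh)"
  have M0: "M \<ge> 0" unfolding M_def by simp
  obtain C0 where C0: "C0 \<ge> 0" "\<forall>y. 1 \<le> \<bar>y\<bar> \<longrightarrow> norm (Jr mu y) \<le> C0 / sqrt \<bar>y\<bar>"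
    using Jr_decay by blast
  define C1 where "C1 = C0 / sqrt m"
  have C1: "C1 \<ge> 0" unfolding C1_def using C0 m by simp
  have Jb: "norm (Jr mu (w * g x)) \<le> C1 / sqrt w" if w: "w \<ge> 1 / m" and x: "x \<in> {a..b}" for w x
  proof -
    have wpos: "w > 0" using w m by (smt (verit) divide_pos_pos)
    have "\<bar>g x\<bar> \<ge> m" unfolding m_def using xm x by simp
    hence A: "w * m \<le> w * \<bar>g x\<bar>" using wpos by (intro mult_left_mono) auto
    have B: "1 \<le> w * m" using w m by (simp add: field_simps)
    have eq: "\<bar>w * g x\<bar> = w * \<bar>g x\<bar>" using wpos by (simp add: abs_mult)
    have big: "1 \<le> \<bar>w * g x\<bar>" "w * m \<le> \<bar>w * g x\<bar>" unfolding eq using A B by linarith+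
    have "norm (Jr mu (w * g x)) \<le> C0 / sqrt \<bar>w * g x\<bar>" using C0 big by blast
    also have "\<dots> \<le> C0 / sqrt (w * m)"
      using big C0(1) wpos m by (intro divide_left_mono real_sqrt_le_mono) (auto intro!: mult_pos_pos)
    also have "\<dots> = C1 / sqrt w" unfolding C1_def using wpos m by (simp add: real_sqrt_mult)
    finally show ?thesis .
  qed
  define K where "K = norm (h b) / \<bar>dI a b g b\<bar> + norm (h a) / \<bar>dI a b g a\<bar>"
  have K0: "K \<ge> 0" unfolding K_def by simp
  show ?thesis
  proof (intro exI allI impI conjI)
    fix w assume w: "1 / m \<le> w"
    have wpos: "w > 0" using w m by (smt (verit) divide_pos_pos)
    have "norm (Hg a b g mu h w) \<le> (M * (C1 / sqrt w)) * (b - a)"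
      unfolding Hg_def
    proof (rule integral_bound)
      show "a \<le> b" using ab by simp
      show "continuous_on {a..b} (\<lambda>x. h x * Jr mu (w * g x))"
        by (intro continuous_on_mult sm_cont[OF ab h] Jg_cont wpos)
      fix t assume t: "t \<in> {a..b}"
      show "norm (h t * Jr mu (w * g t)) \<le> M * (C1 / sqrt w)"
        unfolding norm_mult using xh t Jb[OF w t] M_def by (intro mult_mono) auto
    qed
    also have "\<dots> = ((M * (b - a)) * C1) / sqrt w" by simp
    also have "\<dots> \<le> ((M * (b - a) + K) * C1) / sqrt w"
      using ab K0 C1 M0 wpos by (intro divide_right_mono mult_right_mono) auto
    finally show "norm (Hg a b g mu h w) \<le> ((M * (b - a) + K) * C1) / sqrt w" .
    have "norm (Bd a b g mu h w) \<le> norm (h b / complex_of_real (dI a b g b) * Jr mu (w * g b))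
        + norm (h a / complex_of_real (dI a b g a) * Jr mu (w * g a))"
      unfolding Bd_def by (rule norm_triangle_ineq4)
    also have "\<dots> \<le> norm (h b) / \<bar>dI a b g b\<bar> * (C1 / sqrt w) + norm (h a) / \<bar>dI a b g a\<bar> * (C1 / sqrt w)"
      unfolding norm_mult norm_divide norm_of_real
      using Jb[OF w, of a] Jb[OF w, of b] ab by (intro add_mono mult_left_mono) auto
    also have "\<dots> = K * C1 / sqrt w"
    proof -
      have "dI a b g a \<noteq> 0" "dI a b g b \<noteq> 0" using dgnz ab by auto
      thus ?thesis unfolding K_def using wpos by (simp add: field_simps)
    qed
    also have "\<dots> \<le> ((M * (b - a) + K) * C1) / sqrt w"
      using ab K0 C1 M0 wpos by (intro divide_right_mono mult_right_mono) auto
    finally show "norm (Bd a b g mu h w) \<le> ((M * (b - a) + K) * C1) / sqrt w" .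
  qed
qed

lemma expansion:
  assumes sf: "smooth_on_interval a b f" and w: "w > 0"
  shows "hankelI a b nu g f w + (\<Sum>k=1..N. asym_term a b nu g f k w)
           = Hg a b g (nu + real N) (sigma a b nu g f N) w / (- complex_of_real w) ^ N"
proof (induction N)
  case 0
  show ?case unfolding hankelI_def Hg_def by simp
next
  case (Suc N)
  define z where "z = complex_of_real w"
  have z: "z \<noteq> 0" unfolding z_def using w by simp
  define H where "H = Hg a b g (nu + real N) (sigma a b nu g f N) w"
  define H' where "H' = Hg a b g (nu + real (Suc N)) (sigma a b nu g f (Suc N)) w"
  define B where "B = Bd a b g (nu + real (Suc N)) (sigma a b nu g f N) w"
  have step: "H = (B - H') / z"
    unfolding H_def H'_def B_def z_def sigma_Suc_Sop
    by (rule ibp[OF sigma_sm[OF ab smg gnz dgnz sf] w]) simp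
  have as: "asym_term a b nu g f (Suc N) w = B / (- z) ^ Suc N"
    unfolding asym_term_def B_def Bd_def z_def by (simp add: of_real_power)
  have "hankelI a b nu g f w + (\<Sum>k=1..Suc N. asym_term a b nu g f k w)
      = (hankelI a b nu g f w + (\<Sum>k=1..N. asym_term a b nu g f k w)) + asym_term a b nu g f (Suc N) w"
    by (simp add: add_ac)
  also have "\<dots> = H / (- z) ^ N + B / (- z) ^ Suc N" unfolding Suc.IH as H_def z_def ..
  also have "\<dots> = H' / (- z) ^ Suc N" unfolding step using z by (simp add: field_simps)
  finally show ?case unfolding H'_def z_def .
qed

lemma main:
  assumes sf: "smooth_on_interval a b f"
  shows "(\<lambda>w. hankelI a b nu g f w + (\<Sum>k=1..N. asym_term a b nu g f k w))
      \<in> O[at_top](\<lambda>w. complex_of_real (w powr (- real N - 3/2)))"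
proof -
  obtain C1 w1 where C1: "\<forall>w\<ge>w1. norm (Bd a b g (nu + real (Suc N)) (sigma a b nu g f N) w) \<le> C1 / sqrt w"
    using bound[OF sigma_sm[OF ab smg gnz dgnz sf, of nu N], of "nu + real (Suc N)"] by blast
  obtain C2 w2 where C2: "\<forall>w\<ge>w2. norm (Hg a b g (nu + real (Suc N)) (sigma a b nu g f (Suc N)) w) \<le> C2 / sqrt w"
    using bound[OF sigma_sm[OF ab smg gnz dgnz sf, of nu "Suc N"], of "nu + real (Suc N)"] by blast
  show ?thesis
  proof (rule bigoI[where c = "C1 + C2"], rule eventually_at_top_linorderI[of "max 1 (max w1 w2)"])
    fix w :: real assume wb: "max 1 (max w1 w2) \<le> w"
    hence w: "w > 0" "w \<ge> w1" "w \<ge> w2" "w \<ge> 1" by auto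
    define z where "z = complex_of_real w"
    have z: "z \<noteq> 0" unfolding z_def using w by simp
    define H' where "H' = Hg a b g (nu + real (Suc N)) (sigma a b nu g f (Suc N)) w"
    define B where "B = Bd a b g (nu + real (Suc N)) (sigma a b nu g f N) w"
    have step: "Hg a b g (nu + real N) (sigma a b nu g f N) w = (B - H') / z"
      unfolding H'_def B_def z_def sigma_Suc_Sop
      by (rule ibp[OF sigma_sm[OF ab smg gnz dgnz sf] w(1)]) simp
    have pw: "w powr (- real N - 3/2) = 1 / (w ^ Suc N * sqrt w)"
    proof -
      have "w powr (real N + 3/2) = w powr (real (Suc N)) * w powr (1/2)"
      proof -
        have e: "real N + 3/2 = real (Suc N) + 1/2" by simp
        show ?thesis unfolding e by (rule powr_add)
      qed
      also have "\<dots> = w ^ Suc N * sqrt w"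
        using powr_realpow[of w "Suc N"] powr_half_sqrt[of w] w by simp
      finally have "w powr (real N + 3/2) = w ^ Suc N * sqrt w" .
      moreover have "w powr (- real N - 3/2) = inverse (w powr (real N + 3/2))"
      proof -
        have e: "- real N - 3/2 = - (real N + 3/2)" by simp
        show ?thesis unfolding e by (rule powr_minus)
      qed
      ultimately show ?thesis by (simp add: inverse_eq_divide)
    qed
    have "norm (hankelI a b nu g f w + (\<Sum>k=1..N. asym_term a b nu g f k w))
        = norm ((B - H') / z / (- z) ^ N)"
      unfolding expansion[OF sf w(1)] step z_def ..
    also have "\<dots> = norm (B - H') / (w ^ Suc N)"
      unfolding z_def using w by (simp add: norm_divide norm_power norm_mult)
    also have "\<dots> \<le> (C1 / sqrt w + C2 / sqrt w) / (w ^ Suc N)"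
    proof (rule divide_right_mono)
      have "norm (B - H') \<le> norm B + norm H'" by (rule norm_triangle_ineq4)
      also have "\<dots> \<le> C1 / sqrt w + C2 / sqrt w"
        unfolding B_def H'_def using C1 C2 w by (intro add_mono) auto
      finally show "norm (B - H') \<le> C1 / sqrt w + C2 / sqrt w" .
    qed (use w in simp)
    also have "\<dots> = (C1 + C2) * norm (complex_of_real (w powr (- real N - 3/2)))"
      unfolding norm_of_real pw using w by (simp add: field_simps)
    finally show "norm (hankelI a b nu g f w + (\<Sum>k=1..N. asym_term a b nu g f k w))
        \<le> (C1 + C2) * norm (complex_of_real (w powr (- real N - 3/2)))" .
  qed
qed

end

theorem theorem2p1:
  fixes nu a b :: real and f g :: "real \<Rightarrow> real"
  assumes "a < b"
    and "smooth_on_interval a b f" and "smooth_on_interval a b g"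
    and "\<forall>x\<in>{a..b}. g x \<noteq> 0"
    and "\<forall>x\<in>{a..b}. dI a b g x \<noteq> 0"
  shows "\<forall>N::nat.
    (\<lambda>\<omega>. hankelI a b nu g f \<omega> + (\<Sum>k=1..N. asym_term a b nu g f k \<omega>))
      \<in> O[at_top](\<lambda>\<omega>. complex_of_real (\<omega> powr (- real N - 3/2)))"
  using main[OF assms(1) assms(3) assms(4) assms(5) assms(2)] by blast

end
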